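(* Let $p$ be a complex polynomial of degree $m\ge1$ such that (1) $\mathbf1-p(L)$ is injective, (2) $p(L)^k\to0$ strongly as $k\to\infty$, and (3) every $z\in\mathbb C$ with $1-p(z)=0$ satisfies $|z|=1$. Let $\alpha_1,\dots,\alpha_m$ be the roots of $1-p(z)=0$ counted with multiplicity, and $X_p=\log(Y_p)-\log(Y_p^* )$ with $Y_p=\mathbf1-p(L)$. Then $\big[N,\frac imX_p\big]=-i\mathbf1$ on $\mathrm{ran}\big(\prod_{j=1}^m(\alpha_jL^*-\mathbf1)\big)\cap\mathrm D(X_pN)\cap\mathrm D(NX_p)$.
   Context: $\ell^2=\ell^2(\mathbb N)$, $\mathbb N=\{0,1,\dots\}$, basis $(\xi_n)$; $N\xi_n=n\xi_n$ (self-adjoint, maximal domain); $L$ left shift ($L\xi_n=\xi_{n-1}$, $L\xi_0=0$), $L^*$ right shift. For a linear operator $A$, $\mathrm D(\log A)=\{f\in\bigcap_{k\ge0}\mathrm D(A^k):\lim_K\sum_{k=1}^K\frac1k(\mathbf1-A)^kf\text{ exists}\}$, $\log Af=-\sum_{k\ge1}\frac1k(\mathbf1-A)^kf$; $X_p$ is defined on $\mathrm D(\log Y_p)\cap\mathrm D(\log Y_p^* )$. "$[A,B]=C$ on $\mathcal D$" means $\mathcal D\subset\mathrm D(AB)\cap\mathrm D(BA)$ and $(AB-BA)\varphi=C\varphi$ for $\varphi\in\mathcal D$. *)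

theory Defs
  imports "HOL-Analysis.Analysis" "HOL-Computational_Algebra.Polynomial"
begin

type_synonym vec = "nat \<Rightarrow> complex"

definition l2 :: "vec set" where
  "l2 = {f. summable (\<lambda>n. (cmod (f n))\<^sup>2)}"

definition l2norm :: "vec \<Rightarrow> real" where
  "l2norm f = sqrt (\<Sum>n. (cmod (f n))\<^sup>2)"

definition l2inner :: "vec \<Rightarrow> vec \<Rightarrow> complex" where
  "l2inner f g = (\<Sum>n. f n * cnj (g n))"

definition vadd :: "vec \<Rightarrow> vec \<Rightarrow> vec" where "vadd f g = (\<lambda>n. f n + g n)"
definition vsub :: "vec \<Rightarrow> vec \<Rightarrow> vec" where "vsub f g = (\<lambda>n. f n - g n)"
definition vscale :: "complex \<Rightarrow> vec \<Rightarrow> vec" where "vscale c f = (\<lambda>n. c * f n)"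

type_synonym op = "vec set \<times> (vec \<Rightarrow> vec)"

definition dom :: "op \<Rightarrow> vec set" where "dom A = fst A"
definition app :: "op \<Rightarrow> vec \<Rightarrow> vec" where "app A = snd A"

definition op_id :: op where "op_id = (l2, \<lambda>f. f)"

definition op_comp :: "op \<Rightarrow> op \<Rightarrow> op" where
  "op_comp A B = ({f \<in> dom B. app B f \<in> dom A}, \<lambda>f. app A (app B f))"

fun op_pow :: "op \<Rightarrow> nat \<Rightarrow> op" where
  "op_pow A 0 = op_id"
| "op_pow A (Suc k) = op_comp A (op_pow A k)"

definition op_scale :: "complex \<Rightarrow> op \<Rightarrow> op" where
  "op_scale c A = (dom A, \<lambda>f. vscale c (app A f))"

definition op_sub :: "op \<Rightarrow> op \<Rightarrow> op" where
  "op_sub A B = (dom A \<inter> dom B, \<lambda>f. vsub (app A f) (app B f))"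

definition op_poly :: "complex poly \<Rightarrow> op \<Rightarrow> op" where
  "op_poly p A = ((\<Inter>k\<in>{..degree p}. dom (op_pow A k)),
                  \<lambda>f n. (\<Sum>k\<le>degree p. coeff p k * app (op_pow A k) f n))"

definition op_adj :: "op \<Rightarrow> op" where
  "op_adj A = ({g \<in> l2. \<exists>h\<in>l2. \<forall>f\<in>dom A. l2inner (app A f) g = l2inner f h},
               \<lambda>g. THE h. h \<in> l2 \<and> (\<forall>f\<in>dom A. l2inner (app A f) g = l2inner f h))"

text \<open>Logarithm via the series  log A f = - sum_{k>=1} (1/k) (1 - A)^k f,
  convergence in l2 norm.\<close>
definition log_partial :: "op \<Rightarrow> vec \<Rightarrow> nat \<Rightarrow> vec" where
  "log_partial A f K = (\<lambda>n. \<Sum>k=1..K. (1 / of_nat k) * app (op_pow (op_sub op_id A) k) f n)"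

definition log_conv :: "op \<Rightarrow> vec \<Rightarrow> vec \<Rightarrow> bool" where
  "log_conv A f g \<longleftrightarrow> g \<in> l2 \<and> (\<lambda>K. l2norm (vsub (log_partial A f K) g)) \<longlonglongrightarrow> 0"

definition log_dom :: "op \<Rightarrow> vec set" where
  "log_dom A = {f. f \<in> (\<Inter>k. dom (op_pow A k)) \<and> (\<exists>g. log_conv A f g)}"

definition op_log :: "op \<Rightarrow> op" where
  "op_log A = (log_dom A, \<lambda>f. vscale (-1) (THE g. log_conv A f g))"

definition opN :: op where
  "opN = ({f \<in> l2. (\<lambda>n. of_nat n * f n) \<in> l2}, \<lambda>f n. of_nat n * f n)"

definition opL :: op where
  "opL = (l2, \<lambda>f n. f (Suc n))"

definition opLstar :: op where
  "opLstar = (l2, \<lambda>f n. if n = 0 then 0 else f (n - 1))"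

definition Yp :: "complex poly \<Rightarrow> op" where
  "Yp p = op_sub op_id (op_poly p opL)"

definition Xp :: "complex poly \<Rightarrow> op" where
  "Xp p = op_sub (op_log (Yp p)) (op_log (op_adj (Yp p)))"

definition commutator_on :: "op \<Rightarrow> op \<Rightarrow> op \<Rightarrow> vec set \<Rightarrow> bool" where
  "commutator_on A B C D \<longleftrightarrow>
     D \<subseteq> dom (op_comp A B) \<inter> dom (op_comp B A) \<and> D \<subseteq> dom C \<and>
     (\<forall>\<phi>\<in>D. vsub (app A (app B \<phi>)) (app B (app A \<phi>)) = app C \<phi>)"

definition op_range :: "op \<Rightarrow> vec set" where
  "op_range A = app A ` dom A"

fun root_prod :: "complex list \<Rightarrow> op" where
  "root_prod [] = op_id"
| "root_prod (a # as) = op_comp (op_sub (op_scale a opLstar) op_id) (root_prod as)"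

end

theory Submission
  imports Defs "HOL-Computational_Algebra.Fundamental_Theorem_Algebra"
begin


definition S :: "vec \<Rightarrow> vec" where "S f = (\<lambda>n. f (Suc n))"
definition T :: "vec \<Rightarrow> vec" where "T f = (\<lambda>n. if n = 0 then 0 else f (n - 1))"
definition Nf :: "vec \<Rightarrow> vec" where "Nf f = (\<lambda>n. of_nat n * f n)"

definition flin :: "(vec \<Rightarrow> vec) \<Rightarrow> bool" where
  "flin F \<longleftrightarrow> (\<forall>(A::nat set) c g. finite A \<longrightarrow> F (\<lambda>n. \<Sum>k\<in>A. c k * g k n) = (\<lambda>n. \<Sum>k\<in>A. c k * F (g k) n))"

lemma flin_S: "flin S" unfolding flin_def S_def by auto
lemma flin_T: "flin T" unfolding flin_def T_def by (auto simp: fun_eq_iff)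

lemma flin_comp: "flin F \<Longrightarrow> flin G \<Longrightarrow> flin (F \<circ> G)"
  unfolding flin_def by simp

lemma flin_funpow: "flin F \<Longrightarrow> flin (F ^^ k)"
proof (induction k)
  case 0 then show ?case by (simp add: flin_def)
next
  case (Suc k) show ?case unfolding funpow.simps(2) by (rule flin_comp[OF Suc.prems Suc.IH[OF Suc.prems]])
qed

lemma flin_lin:
  assumes "flin F"
  shows "F (\<lambda>n. a * f n + b * g n) = (\<lambda>n. a * F f n + b * F g n)"
proof -
  have "F (\<lambda>n. \<Sum>k\<in>{0::nat,1}. (if k = 0 then a else b) * (if k = 0 then f else g) n)
      = (\<lambda>n. \<Sum>k\<in>{0::nat,1}. (if k = 0 then a else b) * F (if k = 0 then f else g) n)"
    using assms[unfolded flin_def, rule_format, of "{0::nat,1}" "\<lambda>k. if k = 0 then a else b" "\<lambda>k. if k = 0 then f else g"] by simp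
  then show ?thesis by simp
qed

lemma flin_add: "flin F \<Longrightarrow> F (\<lambda>n. f n + g n) = (\<lambda>n. F f n + F g n)"
  using flin_lin[of F 1 f 1 g] by simp
lemma flin_scale: "flin F \<Longrightarrow> F (\<lambda>n. a * f n) = (\<lambda>n. a * F f n)"
  using flin_lin[of F a f 0 f] by simp
lemma flin_diff: "flin F \<Longrightarrow> F (\<lambda>n. f n - g n) = (\<lambda>n. F f n - F g n)"
  using flin_lin[of F 1 f "-1" g] by simp
lemma flin_zero: "flin F \<Longrightarrow> F (\<lambda>n. 0) = (\<lambda>n. 0)"
  using flin_scale[of F 0 "\<lambda>n. 0"] by simp

definition pop :: "complex poly \<Rightarrow> (vec \<Rightarrow> vec) \<Rightarrow> vec \<Rightarrow> vec" where
  "pop p F f = (\<lambda>n. \<Sum>k\<le>degree p. coeff p k * (F ^^ k) f n)"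

lemma pop_gen: "degree p \<le> M \<Longrightarrow> pop p F f = (\<lambda>n. \<Sum>k\<le>M. coeff p k * (F ^^ k) f n)"
proof -
  assume a: "degree p \<le> M"
  have "(\<Sum>k\<le>M. coeff p k * (F ^^ k) f n) = (\<Sum>k\<le>degree p. coeff p k * (F ^^ k) f n)" for n
    by (rule sum.mono_neutral_right) (use a in \<open>auto simp: coeff_eq_0\<close>)
  then show ?thesis unfolding pop_def by simp
qed

lemma pop_add: "pop (p + q) F f = (\<lambda>n. pop p F f n + pop q F f n)"
proof -
  let ?M = "max (degree p) (degree q)"
  have "degree (p+q) \<le> ?M" by (rule degree_add_le) auto
  then show ?thesis
    by (simp add: pop_gen[of _ ?M] sum.distrib distrib_right)
qed

lemma pop_smult: "pop (smult c p) F f = (\<lambda>n. c * pop p F f n)"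
  by (simp add: pop_gen[of _ "degree p"] sum_distrib_left mult.assoc)

lemma pop_minus: "pop (- p) F f = (\<lambda>n. - pop p F f n)"
  using pop_smult[of "-1" p F f] by simp

lemma pop_diff: "pop (p - q) F f = (\<lambda>n. pop p F f n - pop q F f n)"
  using pop_add[of p "-q" F f] pop_minus[of q F f] by simp

lemma pop_0 [simp]: "pop 0 F f = (\<lambda>n. 0)" by (simp add: pop_def)
lemma pop_1 [simp]: "pop 1 F f = f" by (simp add: pop_def)
lemma pop_const: "pop [:c:] F f = (\<lambda>n. c * f n)" by (simp add: pop_def)

lemma pop_pCons:
  assumes "flin F"
  shows "pop (pCons c q) F f = (\<lambda>n. c * f n + F (pop q F f) n)"
proof -
  have d: "degree (pCons c q) \<le> Suc (degree q)" by (simp add: degree_pCons_le)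
  have "F (pop q F f) = (\<lambda>n. \<Sum>k\<le>degree q. coeff q k * F ((F^^k) f) n)"
    unfolding pop_def using assms[unfolded flin_def, rule_format, of "{..degree q}" "coeff q" "\<lambda>k. (F^^k) f"] by simp
  then show ?thesis
    unfolding pop_gen[OF d] sum.atMost_Suc_shift by (simp del: sum.atMost_Suc)
qed

lemma pop_X: "flin F \<Longrightarrow> pop [:0,1:] F f = F f"
  using pop_pCons[of F 0 1 f] by (simp add: one_pCons pop_const)

lemma pop_lin:
  assumes "flin F"
  shows "pop p F (\<lambda>n. a * f n + b * g n) = (\<lambda>n. a * pop p F f n + b * pop p F g n)"
proof -
  have "(F^^k) (\<lambda>n. a * f n + b * g n) = (\<lambda>n. a * (F^^k) f n + b * (F^^k) g n)" for k
    using flin_lin[OF flin_funpow[OF assms]] .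
  then show ?thesis unfolding pop_def
    by (simp add: sum.distrib sum_distrib_left distrib_left mult.left_commute)
qed

lemma flin_pop: "flin F \<Longrightarrow> flin (pop p F)"
proof -
  assume F: "flin F"
  have h: "(F^^k) (\<lambda>n. \<Sum>j\<in>A. c j * g j n) = (\<lambda>n. \<Sum>j\<in>A. c j * (F^^k) (g j) n)"
    if "finite A" for k and A :: "nat set" and c g
    using flin_funpow[OF F, of k, unfolded flin_def, rule_format, OF that] .
  show ?thesis unfolding flin_def
  proof (intro allI impI)
    fix A :: "nat set" and c g assume A: "finite A"
    show "pop p F (\<lambda>n. \<Sum>k\<in>A. c k * g k n) = (\<lambda>n. \<Sum>k\<in>A. c k * pop p F (g k) n)"
      unfolding pop_def h[OF A] sum_distrib_left
      by (rule ext, subst sum.swap) (auto intro!: sum.cong simp: ac_simps)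
  qed
qed

lemma pop_mult:
  assumes F: "flin F"
  shows "pop (p * q) F f = pop p F (pop q F f)"
proof (induction p)
  case 0 then show ?case by simp
next
  case (pCons c p)
  have "pop (pCons c p * q) F f = pop (smult c q + pCons 0 (p * q)) F f" by simp
  also have "\<dots> = (\<lambda>n. c * pop q F f n + F (pop (p*q) F f) n)"
    by (simp add: pop_add pop_smult pop_pCons[OF F])
  also have "\<dots> = pop (pCons c p) F (pop q F f)"
    by (simp add: pop_pCons[OF F] pCons.IH)
  finally show ?case .
qed

lemma pop_comm: "flin F \<Longrightarrow> pop p F (pop q F f) = pop q F (pop p F f)"
  by (metis pop_mult mult.commute)

lemma pop_F_comm: "flin F \<Longrightarrow> F (pop p F f) = pop p F (F f)"
  by (metis pop_X pop_comm)


lemma S_T: "S (T f) = f" by (simp add: S_def T_def)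
lemma S_app: "S f n = f (Suc n)" by (simp add: S_def)
lemma T_app: "T f n = (if n = 0 then 0 else f (n - 1))" by (simp add: T_def)
lemma S_zero [simp]: "S (\<lambda>n. 0) = (\<lambda>n. 0)" by (simp add: S_def)
lemma T_zero [simp]: "T (\<lambda>n. 0) = (\<lambda>n. 0)" by (simp add: T_def)
lemma funpow_S: "(S^^k) f n = f (n + k)"
  by (induction k arbitrary: n) (simp_all add: S_def)
lemma funpow_T: "(T^^k) f n = (if k \<le> n then f (n - k) else 0)"
  by (induction k arbitrary: n) (auto simp: T_def)

lemma Nf_app: "Nf f n = of_nat n * f n" by (simp add: Nf_def)

lemma comm_pop_S:
  "Nf (pop a S f) n = pop a S (Nf f) n - pop (pCons 0 (pderiv a)) S f n"
proof (induction a arbitrary: n)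
  case 0 then show ?case by (simp add: Nf_def)
next
  case (pCons c q)
  define w where "w = pop q S f"
  define w' where "w' = pop q S (Nf f)"
  define z where "z = pop (pCons 0 (pderiv q)) S f"
  have IH: "w' (Suc n) = of_nat (Suc n) * w (Suc n) + z (Suc n)"
    using pCons.IH[of "Suc n"] by (simp add: Nf_def w_def w'_def z_def eq_diff_eq)
  have h1: "pop (pCons c q) S f = (\<lambda>n. c * f n + S w n)" unfolding w_def by (rule pop_pCons[OF flin_S])
  have h2: "pop (pCons c q) S (Nf f) = (\<lambda>n. c * Nf f n + S w' n)" unfolding w'_def by (rule pop_pCons[OF flin_S])
  have h3: "pop (pCons 0 (pderiv (pCons c q))) S f = (\<lambda>n. 0 * f n + S (pop (pderiv (pCons c q)) S f) n)"
    by (rule pop_pCons[OF flin_S])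
  have h4: "pop (pderiv (pCons c q)) S f = (\<lambda>n. w n + z n)"
    unfolding pderiv_pCons pop_add w_def z_def ..
  show ?case
    apply (simp only: h1 h2 h3 h4)
    by (simp add: Nf_app S_app[of w] S_app[of w'] S_app[of "\<lambda>n. w n + z n"] IH algebra_simps)
qed

lemma comm_pop_T:
  "Nf (pop a T f) n = pop a T (Nf f) n + pop (pCons 0 (pderiv a)) T f n"
proof (induction a arbitrary: n)
  case 0 then show ?case by (simp add: Nf_def)
next
  case (pCons c q)
  define w where "w = pop q T f"
  define w' where "w' = pop q T (Nf f)"
  define z where "z = pop (pCons 0 (pderiv q)) T f"
  have IH: "\<And>n'. of_nat n' * w n' = w' n' + z n'"
    using pCons.IH by (simp add: Nf_def w_def w'_def z_def)
  have h1: "pop (pCons c q) T f = (\<lambda>n. c * f n + T w n)" unfolding w_def by (rule pop_pCons[OF flin_T])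
  have h2: "pop (pCons c q) T (Nf f) = (\<lambda>n. c * Nf f n + T w' n)" unfolding w'_def by (rule pop_pCons[OF flin_T])
  have h3: "pop (pCons 0 (pderiv (pCons c q))) T f = (\<lambda>n. 0 * f n + T (pop (pderiv (pCons c q)) T f) n)"
    by (rule pop_pCons[OF flin_T])
  have h4: "pop (pderiv (pCons c q)) T f = (\<lambda>n. w n + z n)"
    unfolding pderiv_pCons pop_add w_def z_def ..
  show ?case
    apply (simp only: h1 h2 h3 h4)
    apply (cases n)
    by (simp_all add: Nf_app T_app[of w] T_app[of w'] T_app[of "\<lambda>n. w n + z n"] IH[symmetric] algebra_simps)
qed

lemma comm_W: "Nf ((S^^m) f) n = (S^^m) (Nf f) n - of_nat m * (S^^m) f n"
  by (simp add: funpow_S Nf_def algebra_simps)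

lemma pop_power: "flin F \<Longrightarrow> pop (p ^ k) F f = (pop p F ^^ k) f"
  by (induction k) (simp_all add: pop_mult)

lemma comm_pow_S:
  "Nf (pop (p ^ Suc k) S f) n = pop (p ^ Suc k) S (Nf f) n
     - of_nat (Suc k) * pop (p ^ k) S (pop (pCons 0 (pderiv p)) S f) n"
proof -
  have e: "pCons 0 (pderiv (p ^ Suc k)) = smult (of_nat (Suc k)) (p ^ k * pCons 0 (pderiv p))"
    unfolding pderiv_power_Suc by (simp add: mult_pCons_right algebra_simps)
  have c: "Nf (pop (p ^ Suc k) S f) n = pop (p ^ Suc k) S (Nf f) n - pop (pCons 0 (pderiv (p ^ Suc k))) S f n"
    by (rule comm_pop_S)
  show ?thesis unfolding c e pop_smult pop_mult[OF flin_S] ..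
qed

lemma comm_pow_T:
  "Nf (pop (p ^ Suc k) T f) n = pop (p ^ Suc k) T (Nf f) n
     + of_nat (Suc k) * pop (p ^ k) T (pop (pCons 0 (pderiv p)) T f) n"
proof -
  have e: "pCons 0 (pderiv (p ^ Suc k)) = smult (of_nat (Suc k)) (p ^ k * pCons 0 (pderiv p))"
    unfolding pderiv_power_Suc by (simp add: mult_pCons_right algebra_simps)
  have c: "Nf (pop (p ^ Suc k) T f) n = pop (p ^ Suc k) T (Nf f) n + pop (pCons 0 (pderiv (p ^ Suc k))) T f n"
    by (rule comm_pop_T)
  show ?thesis unfolding c e pop_smult pop_mult[OF flin_T] ..
qed

lemma W_prod:
  "(S^^length bs) (pop (\<Prod>b\<leftarrow>bs. [:-b,1:]) T v) = pop (\<Prod>b\<leftarrow>bs. [:1,-b:]) S v"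
proof (induction bs arbitrary: v)
  case Nil then show ?case by simp
next
  case (Cons b bs)
  let ?w = "pop (\<Prod>b\<leftarrow>bs. [:-b,1:]) T v"
  have e1: "pop (\<Prod>b\<leftarrow>b#bs. [:-b,1:]) T v = pop [:-b,1:] T ?w"
    by (simp add: pop_mult[OF flin_T, symmetric])
  have e2: "pop [:-b,1:] T ?w = (\<lambda>n. - b * ?w n + T ?w n)"
    by (simp add: pop_pCons[OF flin_T] pop_const)
  have "(S^^length (b#bs)) (pop (\<Prod>b\<leftarrow>b#bs. [:-b,1:]) T v)
      = (S^^length bs) (S (\<lambda>n. - b * ?w n + T ?w n))"
    unfolding e1 e2 by (simp add: funpow_swap1)
  also have "S (\<lambda>n. - b * ?w n + T ?w n) = (\<lambda>n. - b * S ?w n + ?w n)"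
    by (simp add: S_def T_def)
  also have "(S^^length bs) (\<lambda>n. - b * S ?w n + ?w n) = (\<lambda>n. - b * S ((S^^length bs) ?w) n + (S^^length bs) ?w n)"
    by (simp add: funpow_S S_def fun_eq_iff)
  also have "\<dots> = pop (\<Prod>b\<leftarrow>b#bs. [:1,-b:]) S v"
  proof -
    have "pop (\<Prod>b\<leftarrow>b#bs. [:1,-b:]) S v = pop [:1,-b:] S (pop (\<Prod>b\<leftarrow>bs. [:1,-b:]) S v)"
      by (simp add: pop_mult[OF flin_S, symmetric])
    also have "\<dots> = (\<lambda>n. pop (\<Prod>b\<leftarrow>bs. [:1,-b:]) S v n + S (pop [:-b:] S (pop (\<Prod>b\<leftarrow>bs. [:1,-b:]) S v)) n)"
      by (simp add: pop_pCons[OF flin_S])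
    finally show ?thesis
      by (simp add: Cons.IH pop_const S_app[of "pop (\<Prod>b\<leftarrow>bs. [:1,-b:]) S v"]
        S_app[of "\<lambda>n. - (b * pop (\<Prod>b\<leftarrow>bs. [:1,-b:]) S v n)"])
  qed
  finally show ?case .
qed


lemma l2_iff: "f \<in> l2 \<longleftrightarrow> summable (\<lambda>n. (cmod (f n))\<^sup>2)" by (simp add: l2_def)

lemma l2_add: assumes "f \<in> l2" "g \<in> l2" shows "(\<lambda>n. f n + g n) \<in> l2"
proof -
  have b: "norm ((cmod (f n + g n))\<^sup>2) \<le> 2 * (cmod (f n))\<^sup>2 + 2 * (cmod (g n))\<^sup>2" for n
  proof -
    have "cmod (f n + g n) \<le> cmod (f n) + cmod (g n)" by (rule norm_triangle_ineq)
    then have "(cmod (f n + g n))\<^sup>2 \<le> (cmod (f n) + cmod (g n))\<^sup>2" by (simp add: power_mono)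
    also have "\<dots> \<le> 2 * (cmod (f n))\<^sup>2 + 2 * (cmod (g n))\<^sup>2"
      unfolding power2_sum using sum_squares_bound[of "cmod (f n)" "cmod (g n)"] by linarith
    finally show ?thesis by simp
  qed
  have s: "summable (\<lambda>n. 2 * (cmod (f n))\<^sup>2 + 2 * (cmod (g n))\<^sup>2)"
  proof -
    have a: "summable (\<lambda>n. (cmod (f n))\<^sup>2)" "summable (\<lambda>n. (cmod (g n))\<^sup>2)"
      using assms by (simp_all add: l2_def)
    show ?thesis by (rule summable_add; rule summable_mult; rule a)
  qed
  have "summable (\<lambda>n. (cmod (f n + g n))\<^sup>2)"
    by (rule summable_comparison_test'[OF s]) (rule b)
  then show ?thesis unfolding l2_def by simp
qed

lemma l2_scale: assumes "f \<in> l2" shows "(\<lambda>n. c * f n) \<in> l2"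
  using assms summable_mult[of "\<lambda>n. (cmod (f n))\<^sup>2" "(cmod c)\<^sup>2"]
  by (simp add: l2_def norm_mult power_mult_distrib)

lemma l2_zero [simp]: "(\<lambda>n. 0) \<in> l2" by (simp add: l2_def)

lemma l2_minus: "f \<in> l2 \<Longrightarrow> (\<lambda>n. - f n) \<in> l2"
  using l2_scale[of f "-1"] by simp

lemma l2_diff: "f \<in> l2 \<Longrightarrow> g \<in> l2 \<Longrightarrow> (\<lambda>n. f n - g n) \<in> l2"
  using l2_add[of f "\<lambda>n. - g n"] l2_minus[of g] by simp

lemma l2_lin: "f \<in> l2 \<Longrightarrow> g \<in> l2 \<Longrightarrow> (\<lambda>n. a * f n + b * g n) \<in> l2"
  by (intro l2_add l2_scale)

lemma l2_sum: "finite A \<Longrightarrow> (\<And>k. k \<in> A \<Longrightarrow> g k \<in> l2) \<Longrightarrow> (\<lambda>n. \<Sum>k\<in>A. c k * g k n) \<in> l2"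
proof (induction A rule: finite_induct)
  case empty then show ?case by simp
next
  case (insert x F)
  then show ?case using l2_add[of "\<lambda>n. c x * g x n" "\<lambda>n. \<Sum>k\<in>F. c k * g k n"] l2_scale[of "g x" "c x"] by simp
qed

lemma l2_S: assumes "f \<in> l2" shows "S f \<in> l2"
proof -
  have "summable (\<lambda>n. (cmod (f n))\<^sup>2)" using assms by (simp add: l2_def)
  then have "summable (\<lambda>n. (cmod (f (n + 1)))\<^sup>2)"
    by (rule summable_ignore_initial_segment)
  then show ?thesis unfolding l2_def S_def by simp
qed

lemma l2_T: assumes "f \<in> l2" shows "T f \<in> l2"
proof -
  have "summable (\<lambda>n. (cmod (T f n))\<^sup>2)"
    by (subst summable_Suc_iff[symmetric]) (use assms in \<open>simp add: l2_def T_def\<close>)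
  then show ?thesis unfolding l2_def by simp
qed

lemma l2_funpow: "(\<And>f. f \<in> l2 \<Longrightarrow> F f \<in> l2) \<Longrightarrow> f \<in> l2 \<Longrightarrow> (F ^^ k) f \<in> l2"
  by (induction k) auto

lemma l2_pop: "(\<And>f. f \<in> l2 \<Longrightarrow> F f \<in> l2) \<Longrightarrow> f \<in> l2 \<Longrightarrow> pop p F f \<in> l2"
  unfolding pop_def by (intro l2_sum l2_funpow) auto

lemma l2_popS: "f \<in> l2 \<Longrightarrow> pop p S f \<in> l2" by (rule l2_pop[OF l2_S])
lemma l2_popT: "f \<in> l2 \<Longrightarrow> pop p T f \<in> l2" by (rule l2_pop[OF l2_T])

lemma l2norm_nonneg: "f \<in> l2 \<Longrightarrow> l2norm f \<ge> 0" by (simp add: l2norm_def l2_def suminf_nonneg)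

lemma coord_le: assumes "f \<in> l2" shows "cmod (f n) \<le> l2norm f"
proof -
  have "(cmod (f n))\<^sup>2 \<le> (\<Sum>n. (cmod (f n))\<^sup>2)"
    using assms unfolding l2_def by (intro sum_le_suminf[of _ "{n}", simplified]) auto
  then show ?thesis unfolding l2norm_def by (simp add: real_le_rsqrt)
qed

lemma coord_tendsto:
  assumes "\<And>K. h K \<in> l2" and "(\<lambda>K. l2norm (h K)) \<longlonglongrightarrow> 0"
  shows "(\<lambda>K. h K n) \<longlonglongrightarrow> 0"
  by (rule Lim_null_comparison[OF _ assms(2)]) (use coord_le[OF assms(1)] in auto)

lemma summable_abs_prod:
  assumes "f \<in> l2" "g \<in> l2" shows "summable (\<lambda>n. cmod (f n) * cmod (g n))"
proof -
  have b: "norm (cmod (f n) * cmod (g n)) \<le> (cmod (f n))\<^sup>2 + (cmod (g n))\<^sup>2" for n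
  proof -
    have "0 \<le> cmod (f n) * cmod (g n)" by simp
    moreover have "norm (cmod (f n) * cmod (g n)) = cmod (f n) * cmod (g n)" by (simp add: abs_mult)
    ultimately show ?thesis using sum_squares_bound[of "cmod (f n)" "cmod (g n)"] by linarith
  qed
  have s: "summable (\<lambda>n. (cmod (f n))\<^sup>2 + (cmod (g n))\<^sup>2)"
  proof -
    have a: "summable (\<lambda>n. (cmod (f n))\<^sup>2)" "summable (\<lambda>n. (cmod (g n))\<^sup>2)"
      using assms by (simp_all add: l2_def)
    show ?thesis by (rule summable_add; rule a)
  qed
  show ?thesis
    by (rule summable_comparison_test'[OF s]) (rule b)
qed

lemma summable_inner: assumes "f \<in> l2" "g \<in> l2" shows "summable (\<lambda>n. f n * cnj (g n))"
  by (rule summable_norm_cancel) (use summable_abs_prod[OF assms] in \<open>simp add: norm_mult\<close>)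

lemma inner_add_left: "f \<in> l2 \<Longrightarrow> g \<in> l2 \<Longrightarrow> h \<in> l2 \<Longrightarrow>
   l2inner (\<lambda>n. f n + g n) h = l2inner f h + l2inner g h"
  unfolding l2inner_def by (simp add: distrib_right suminf_add summable_inner)

lemma inner_scale_left: "f \<in> l2 \<Longrightarrow> h \<in> l2 \<Longrightarrow> l2inner (\<lambda>n. c * f n) h = c * l2inner f h"
  unfolding l2inner_def by (simp add: mult.assoc suminf_mult summable_inner)

lemma inner_add_right: "f \<in> l2 \<Longrightarrow> g \<in> l2 \<Longrightarrow> h \<in> l2 \<Longrightarrow>
   l2inner h (\<lambda>n. f n + g n) = l2inner h f + l2inner h g"
  unfolding l2inner_def by (simp add: distrib_left suminf_add summable_inner)

lemma inner_scale_right: "f \<in> l2 \<Longrightarrow> h \<in> l2 \<Longrightarrow> l2inner h (\<lambda>n. c * f n) = cnj c * l2inner h f"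
proof -
  assume a: "f \<in> l2" "h \<in> l2"
  have "l2inner h (\<lambda>n. c * f n) = (\<Sum>n. cnj c * (h n * cnj (f n)))"
    unfolding l2inner_def by (simp add: algebra_simps)
  then show ?thesis unfolding l2inner_def using a by (simp add: suminf_mult summable_inner)
qed

lemma inner_S_T: assumes "f \<in> l2" "g \<in> l2" shows "l2inner (S f) g = l2inner f (T g)"
proof -
  have sm: "summable (\<lambda>n. f n * cnj (T g n))" using assms l2_T by (simp add: summable_inner)
  have "l2inner f (T g) = (\<Sum>n. f (Suc n) * cnj (T g (Suc n))) + f 0 * cnj (T g 0)"
    unfolding l2inner_def using suminf_split_head[OF sm] by simp
  also have "\<dots> = l2inner (S f) g" by (simp add: l2inner_def S_def T_def)
  finally show ?thesis by simp
qed

lemma CS: assumes "f \<in> l2" "g \<in> l2" shows "cmod (l2inner f g) \<le> l2norm f * l2norm g"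
proof -
  have sa: "summable (\<lambda>n. cmod (f n) * cmod (g n))" by (rule summable_abs_prod[OF assms])
  have "cmod (l2inner f g) \<le> (\<Sum>n. norm (f n * cnj (g n)))"
    unfolding l2inner_def by (rule summable_norm) (use sa in \<open>simp add: norm_mult\<close>)
  also have "\<dots> = (\<Sum>n. cmod (f n) * cmod (g n))" by (simp add: norm_mult)
  also have "\<dots> \<le> l2norm f * l2norm g"
  proof (rule suminf_le_const[OF sa])
    fix M
    have "(\<Sum>n<M. cmod (f n) * cmod (g n)) = (\<Sum>n<M. \<bar>cmod (f n)\<bar> * \<bar>cmod (g n)\<bar>)" by simp
    also have "\<dots> \<le> L2_set (\<lambda>n. cmod (f n)) {..<M} * L2_set (\<lambda>n. cmod (g n)) {..<M}"
      by (rule L2_set_mult_ineq)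
    also have "\<dots> \<le> l2norm f * l2norm g"
    proof (rule mult_mono)
      show "L2_set (\<lambda>n. cmod (f n)) {..<M} \<le> l2norm f"
        unfolding L2_set_def l2norm_def using assms(1)
        by (intro real_sqrt_le_mono sum_le_suminf) (auto simp: l2_def)
      show "L2_set (\<lambda>n. cmod (g n)) {..<M} \<le> l2norm g"
        unfolding L2_set_def l2norm_def using assms(2)
        by (intro real_sqrt_le_mono sum_le_suminf) (auto simp: l2_def)
    qed (use assms in \<open>auto simp: l2norm_nonneg L2_set_def intro!: sum_nonneg\<close>)
    finally show "(\<Sum>n<M. cmod (f n) * cmod (g n)) \<le> l2norm f * l2norm g" .
  qed
  finally show ?thesis .
qed

definition delta :: "nat \<Rightarrow> vec" where "delta j = (\<lambda>n. if n = j then 1 else 0)"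

lemma delta_l2: "delta j \<in> l2"
proof -
  have "(\<lambda>n. (cmod (delta j n))\<^sup>2) = (\<lambda>n. if n = j then 1 else 0)"
    by (auto simp: delta_def)
  then show ?thesis unfolding l2_def using sums_single[of j "\<lambda>_. 1::real"] sums_summable by auto
qed

lemma inner_delta_left: "l2inner (delta j) v = cnj (v j)"
proof -
  have "(\<lambda>n. delta j n * cnj (v n)) = (\<lambda>n. if n = j then cnj (v n) else 0)"
    by (auto simp: delta_def)
  then show ?thesis unfolding l2inner_def using sums_unique[OF sums_single[of j "\<lambda>n. cnj (v n)"]] by simp
qed

lemma l2_eqI: assumes "h \<in> l2" "h' \<in> l2" "\<forall>f\<in>l2. l2inner f h = l2inner f h'" shows "h = h'"
proof
  fix n show "h n = h' n" using assms(3)[rule_format, OF delta_l2[of n]] by (simp add: inner_delta_left)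
qed


lemma dom_op_id [simp]: "dom op_id = l2" and app_op_id [simp]: "app op_id f = f"
  by (simp_all add: op_id_def dom_def app_def)

lemma dom_op_comp: "dom (op_comp A B) = {f \<in> dom B. app B f \<in> dom A}"
  and app_op_comp: "app (op_comp A B) f = app A (app B f)"
  by (simp_all add: op_comp_def dom_def app_def)

lemma app_op_pow: "app (op_pow A k) = (app A) ^^ k"
proof (induction k)
  case 0 then show ?case by (simp add: fun_eq_iff)
next
  case (Suc k) show ?case by (rule ext) (simp add: app_op_comp Suc.IH)
qed

lemma dom_op_pow:
  assumes "dom A = l2" "\<And>f. f \<in> l2 \<Longrightarrow> app A f \<in> l2"
  shows "dom (op_pow A k) = l2"
proof (induction k)
  case 0 then show ?case by simp
next
  case (Suc k)
  have "app (op_pow A k) f \<in> l2" if "f \<in> l2" for f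
    unfolding app_op_pow by (rule l2_funpow[OF assms(2) that])
  then show ?case using Suc by (auto simp: dom_op_comp assms(1))
qed

lemma dom_op_sub: "dom (op_sub A B) = dom A \<inter> dom B"
  and app_op_sub: "app (op_sub A B) f = vsub (app A f) (app B f)"
  by (simp_all add: op_sub_def dom_def app_def)

lemma dom_op_scale: "dom (op_scale c A) = dom A"
  and app_op_scale: "app (op_scale c A) f = vscale c (app A f)"
  by (simp_all add: op_scale_def dom_def app_def)

lemma dom_opL: "dom opL = l2" and app_opL: "app opL = S"
  by (simp_all add: opL_def dom_def app_def S_def[abs_def])

lemma dom_opLstar: "dom opLstar = l2" and app_opLstar: "app opLstar = T"
  by (simp_all add: opLstar_def dom_def app_def T_def[abs_def])

lemma dom_opN: "dom opN = {f \<in> l2. Nf f \<in> l2}" and app_opN: "app opN = Nf"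
  by (simp_all add: opN_def dom_def app_def Nf_def[abs_def])

lemma dom_poly_L: "dom (op_poly p opL) = l2"
proof -
  have "dom (op_pow opL k) = l2" for k
    by (rule dom_op_pow) (simp_all add: dom_opL app_opL l2_S)
  then show ?thesis by (simp add: op_poly_def dom_def)
qed

lemma app_poly_L: "app (op_poly p opL) = pop p S"
  by (simp add: op_poly_def app_def[of "(_, _)"] fun_eq_iff app_op_pow app_opL pop_def)

lemma dom_Yp: "dom (Yp p) = l2"
  by (simp add: Yp_def dom_op_sub dom_poly_L)

lemma app_Yp: "app (Yp p) f = pop (1 - p) S f"
  by (simp add: Yp_def app_op_sub app_poly_L vsub_def pop_diff)

definition Qop :: "complex poly \<Rightarrow> op" where "Qop p = op_sub op_id (Yp p)"

lemma app_Qop: "app (Qop p) f = pop p S f"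
  by (simp add: Qop_def app_op_sub app_Yp vsub_def pop_diff)

lemma app_pow_Qop: "app (op_pow (Qop p) k) f = pop (p ^ k) S f"
  by (simp add: app_op_pow app_Qop[abs_def] pop_power[OF flin_S])

lemma inner_pop:
  assumes "f \<in> l2" "g \<in> l2"
  shows "l2inner (pop a S f) g = l2inner f (pop (map_poly cnj a) T g)"
  using assms
proof (induction a arbitrary: g)
  case 0 then show ?case by (simp add: l2inner_def)
next
  case (pCons c q)
  have w: "pop q S f \<in> l2" using pCons.prems by (simp add: l2_popS)
  have w2: "pop (map_poly cnj q) T g \<in> l2" using pCons.prems by (simp add: l2_popT)
  have "l2inner (pop (pCons c q) S f) g = l2inner (\<lambda>n. c * f n + S (pop q S f) n) g"
    by (simp add: pop_pCons[OF flin_S])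
  also have "\<dots> = c * l2inner f g + l2inner (S (pop q S f)) g"
    using pCons.prems w l2_S[OF w] l2_scale[of f c]
    by (simp add: inner_add_left inner_scale_left)
  also have "l2inner (S (pop q S f)) g = l2inner (pop q S f) (T g)"
    by (rule inner_S_T[OF w pCons.prems(2)])
  also have "\<dots> = l2inner f (pop (map_poly cnj q) T (T g))"
    using pCons.IH[OF pCons.prems(1) l2_T[OF pCons.prems(2)]] .
  also have "pop (map_poly cnj q) T (T g) = T (pop (map_poly cnj q) T g)"
    by (simp add: pop_F_comm[OF flin_T])
  also have "c * l2inner f g + l2inner f (T (pop (map_poly cnj q) T g))
      = l2inner f (\<lambda>n. cnj c * g n + T (pop (map_poly cnj q) T g) n)"
    using pCons.prems w2 l2_T[OF w2] l2_scale[of g "cnj c"]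
    by (simp add: inner_add_right inner_scale_right)
  also have "\<dots> = l2inner f (pop (map_poly cnj (pCons c q)) T g)"
    by (simp add: map_poly_pCons pop_pCons[OF flin_T])
  finally show ?case .
qed

definition Pb :: "complex poly \<Rightarrow> complex poly" where "Pb p = map_poly cnj (1 - p)"

lemma dom_adj: "dom (op_adj (Yp p)) = l2"
  and app_adj: "g \<in> l2 \<Longrightarrow> app (op_adj (Yp p)) g = pop (Pb p) T g"
proof -
  have key: "h \<in> l2 \<and> (\<forall>f\<in>dom (Yp p). l2inner (app (Yp p) f) g = l2inner f h) \<longleftrightarrow> h = pop (Pb p) T g"
    if g: "g \<in> l2" for g h
  proof
    assume h: "h \<in> l2 \<and> (\<forall>f\<in>dom (Yp p). l2inner (app (Yp p) f) g = l2inner f h)"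
    show "h = pop (Pb p) T g"
    proof (rule l2_eqI)
      show "h \<in> l2" using h by simp
      show "pop (Pb p) T g \<in> l2" using g by (rule l2_popT)
      show "\<forall>f\<in>l2. l2inner f h = l2inner f (pop (Pb p) T g)"
        using h g by (auto simp: dom_Yp app_Yp inner_pop Pb_def)
    qed
  next
    assume "h = pop (Pb p) T g"
    then show "h \<in> l2 \<and> (\<forall>f\<in>dom (Yp p). l2inner (app (Yp p) f) g = l2inner f h)"
      using g by (auto simp: dom_Yp app_Yp inner_pop Pb_def l2_popT)
  qed
  show "dom (op_adj (Yp p)) = l2"
    unfolding op_adj_def dom_def[of "(_,_)"] using key by auto
  show "app (op_adj (Yp p)) g = pop (Pb p) T g" if "g \<in> l2"
    unfolding op_adj_def app_def[of "(_,_)"] snd_conv using key[OF that] by simp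
qed

definition Qadj :: "complex poly \<Rightarrow> op" where "Qadj p = op_sub op_id (op_adj (Yp p))"

lemma app_Qadj: "g \<in> l2 \<Longrightarrow> app (Qadj p) g = pop (1 - Pb p) T g"
  by (simp add: Qadj_def app_op_sub app_adj vsub_def pop_diff)

lemma app_pow_Qadj: "g \<in> l2 \<Longrightarrow> app (op_pow (Qadj p) k) g = pop ((1 - Pb p) ^ k) T g"
proof (induction k)
  case 0 then show ?case by simp
next
  case (Suc k)
  have "app (op_pow (Qadj p) (Suc k)) g = app (Qadj p) (pop ((1 - Pb p) ^ k) T g)"
    using Suc by (simp add: app_op_comp)
  also have "\<dots> = pop (1 - Pb p) T (pop ((1 - Pb p) ^ k) T g)"
    using Suc.prems by (simp add: app_Qadj l2_popT)
  also have "\<dots> = pop ((1 - Pb p) ^ Suc k) T g" by (simp add: pop_mult[OF flin_T])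
  finally show ?case .
qed

lemma log_coord:
  assumes f: "f \<in> log_dom A" and lp: "\<And>K. log_partial A f K \<in> l2"
  shows "(\<lambda>K. log_partial A f K n) \<longlonglongrightarrow> - app (op_log A) f n"
proof -
  have conv: "(\<lambda>K. log_partial A f K n) \<longlonglongrightarrow> g n" if "log_conv A f g" for g n
  proof -
    have g: "g \<in> l2" and t: "(\<lambda>K. l2norm (vsub (log_partial A f K) g)) \<longlonglongrightarrow> 0"
      using that by (auto simp: log_conv_def)
    have "(\<lambda>K. vsub (log_partial A f K) g n) \<longlonglongrightarrow> 0"
      by (rule coord_tendsto[OF _ t]) (use lp g in \<open>simp add: vsub_def l2_diff\<close>)
    then have "(\<lambda>K. log_partial A f K n - g n) \<longlonglongrightarrow> 0" by (simp add: vsub_def)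
    then show ?thesis by (simp add: LIM_zero_iff)
  qed
  obtain g where g: "log_conv A f g" using f by (auto simp: log_dom_def)
  have "(THE g. log_conv A f g) = g"
  proof (rule the_equality[where P="\<lambda>g. log_conv A f g", OF g])
    fix g' assume g': "log_conv A f g'"
    show "g' = g"
    proof
      fix n show "g' n = g n" using LIMSEQ_unique[OF conv[OF g'] conv[OF g]] .
    qed
  qed
  then have "- app (op_log A) f n = g n"
    by (simp add: op_log_def app_def[of "(_,_)"] vscale_def)
  then show ?thesis using conv[OF g] by simp
qed


lemma mpc_mult: "map_poly cnj (x * y) = map_poly cnj x * map_poly cnj (y :: complex poly)"
proof -
  have "poly (map_poly cnj (x * y)) = poly (map_poly cnj x * map_poly cnj y)"
    by (rule ext) simp
  then show ?thesis by (simp add: poly_eq_poly_eq_iff)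
qed

lemma mpc_prod: "map_poly cnj (\<Prod>a\<leftarrow>as. [:-a,1:]) = (\<Prod>a\<leftarrow>as. [:-cnj a,1:])"
proof (induction as)
  case (Cons a as)
  have "map_poly cnj (\<Prod>a\<leftarrow>a#as. [:-a,1:]) = map_poly cnj [:-a,1:] * map_poly cnj (\<Prod>a\<leftarrow>as. [:-a,1:])"
    by (simp only: list.map prod_list.Cons mpc_mult)
  then show ?case using Cons by (simp add: map_poly_pCons)
qed simp

lemma prod_rev_factor:
  assumes "\<forall>a\<in>set as. cmod a = 1"
  shows "(\<Prod>a\<leftarrow>as. [:1,-cnj a:]) = smult (\<Prod>a\<leftarrow>as. - cnj a) (\<Prod>a\<leftarrow>as. [:-a,1:])"
  using assms
proof (induction as)
  case Nil then show ?case by simp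
next
  case (Cons a as)
  have "cnj a * a = 1" using Cons.prems by (simp add: complex_norm_square[symmetric] mult.commute)
  then have f: "[:1,-cnj a:] = smult (- cnj a) [:-a,1:]" by simp
  have IH: "(\<Prod>a\<leftarrow>as. [:1,-cnj a:]) = smult (\<Prod>a\<leftarrow>as. - cnj a) (\<Prod>a\<leftarrow>as. [:-a,1:])"
    using Cons by simp
  have "(\<Prod>a\<leftarrow>a#as. [:1,-cnj a:]) = smult (- cnj a) [:-a,1:] * smult (\<Prod>a\<leftarrow>as. - cnj a) (\<Prod>a\<leftarrow>as. [:-a,1:])"
    by (simp only: list.map prod_list.Cons f IH)
  also have "\<dots> = smult (- cnj a * (\<Prod>a\<leftarrow>as. - cnj a)) ([:-a,1:] * (\<Prod>a\<leftarrow>as. [:-a,1:]))"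
    by (simp only: mult_smult_left mult_smult_right smult_smult mult.commute)
  finally show ?case by (simp only: list.map prod_list.Cons)
qed

lemma prod_rp_factor:
  assumes "\<forall>a\<in>set as. cmod a = 1"
  shows "(\<Prod>a\<leftarrow>as. [:-1,a:]) = smult (\<Prod>a\<leftarrow>as. a) (\<Prod>a\<leftarrow>as. [:-cnj a,1:])"
  using assms
proof (induction as)
  case Nil then show ?case by simp
next
  case (Cons a as)
  have "a * cnj a = 1" using Cons.prems by (simp add: complex_norm_square[symmetric])
  then have f: "[:-1,a:] = smult a [:-cnj a,1:]" by simp
  have IH: "(\<Prod>a\<leftarrow>as. [:-1,a:]) = smult (\<Prod>a\<leftarrow>as. a) (\<Prod>a\<leftarrow>as. [:-cnj a,1:])"
    using Cons by simp
  have "(\<Prod>a\<leftarrow>a#as. [:-1,a:]) = smult a [:-cnj a,1:] * smult (\<Prod>a\<leftarrow>as. a) (\<Prod>a\<leftarrow>as. [:-cnj a,1:])"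
    by (simp only: list.map prod_list.Cons f IH)
  also have "\<dots> = smult (a * (\<Prod>a\<leftarrow>as. a)) ([:-cnj a,1:] * (\<Prod>a\<leftarrow>as. [:-cnj a,1:]))"
    by (simp only: mult_smult_left mult_smult_right smult_smult mult.commute)
  finally show ?case by (simp only: list.map prod_list.Cons)
qed

lemma app_root_prod: "app (root_prod as) f = pop (\<Prod>a\<leftarrow>as. [:-1,a:]) T f"
proof (induction as arbitrary: f)
  case Nil then show ?case by simp
next
  case (Cons a as)
  let ?w = "pop (\<Prod>a\<leftarrow>as. [:-1,a:]) T f"
  have "app (root_prod (a # as)) f = (\<lambda>n. a * T ?w n - ?w n)"
    by (simp add: app_op_comp app_op_sub app_op_scale app_opLstar Cons.IH vsub_def vscale_def)
  also have "\<dots> = pop [:-1,a:] T ?w"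
    by (simp add: pop_pCons[OF flin_T] pop_const flin_scale[OF flin_T])
  also have "\<dots> = pop (\<Prod>a\<leftarrow>a#as. [:-1,a:]) T f"
    by (simp only: list.map prod_list.Cons pop_mult[OF flin_T])
  finally show ?case .
qed

lemma dom_root_prod: "dom (root_prod as) \<subseteq> l2"
  by (induction as) (auto simp: dom_op_comp)

lemma key_identity:
  fixes P Pc :: "complex poly" and \<kappa> :: complex and m :: nat
  assumes W: "\<And>v. (S^^m) (pop Pc T v) = (\<lambda>n. \<kappa> * pop P S v n)" and k0: "\<kappa> \<noteq> 0"
  shows "pop (pCons 0 (pderiv P)) S (pop Pc T g) n
       = pop P S (\<lambda>n. of_nat m * pop Pc T g n - pop (pCons 0 (pderiv Pc)) T g n) n"
proof -
  define Y where "Y = pop P S"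
  define Yb where "Yb = pop Pc T"
  define D where "D = pop (pCons 0 (pderiv P)) S"
  define Db where "Db = pop (pCons 0 (pderiv Pc)) T"
  have star: "(S^^m) (Db v) n = of_nat m * \<kappa> * Y v n - \<kappa> * D v n" for v n
  proof -
    have "Nf ((S^^m) (Yb v)) n = \<kappa> * Nf (Y v) n"
      using W[of v] by (simp add: Yb_def Y_def Nf_app)
    also have "Nf (Y v) n = Y (Nf v) n - D v n"
      unfolding Y_def D_def by (rule comm_pop_S)
    finally have e1: "Nf ((S^^m) (Yb v)) n = \<kappa> * (Y (Nf v) n - D v n)" .
    have "Nf ((S^^m) (Yb v)) n = (S^^m) (Nf (Yb v)) n - of_nat m * (S^^m) (Yb v) n"
      by (rule comm_W)
    also have "Nf (Yb v) = (\<lambda>n. Yb (Nf v) n + Db v n)"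
      unfolding Yb_def Db_def by (rule ext) (rule comm_pop_T)
    also have "(S^^m) (\<lambda>n. Yb (Nf v) n + Db v n) n = (S^^m) (Yb (Nf v)) n + (S^^m) (Db v) n"
      by (simp add: funpow_S)
    also have "(S^^m) (Yb (Nf v)) n = \<kappa> * Y (Nf v) n"
      using W[of "Nf v"] by (simp add: Yb_def Y_def)
    also have "(S^^m) (Yb v) n = \<kappa> * Y v n"
      using W[of v] by (simp add: Yb_def Y_def)
    finally have e2: "Nf ((S^^m) (Yb v)) n = \<kappa> * Y (Nf v) n + (S^^m) (Db v) n - of_nat m * (\<kappa> * Y v n)" .
    from e1 e2 show ?thesis by algebra
  qed
  have "(S^^m) (Db (Yb g)) n = (S^^m) (Yb (Db g)) n"
    unfolding Db_def Yb_def by (simp add: pop_comm[OF flin_T])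
  also have "\<dots> = \<kappa> * Y (Db g) n" using W[of "Db g"] by (simp add: Yb_def Y_def)
  finally have "\<kappa> * Y (Db g) n = of_nat m * \<kappa> * Y (Yb g) n - \<kappa> * D (Yb g) n"
    using star[of "Yb g" n] by simp
  then have "\<kappa> * D (Yb g) n = \<kappa> * (of_nat m * Y (Yb g) n - Y (Db g) n)"
    by algebra
  then have "D (Yb g) n = of_nat m * Y (Yb g) n - Y (Db g) n"
    using k0 by simp
  also have "\<dots> = Y (\<lambda>n. of_nat m * Yb g n + (-1) * Db g n) n"
    unfolding Y_def pop_lin[OF flin_S] by simp
  finally show ?thesis by (simp add: D_def Y_def Yb_def Db_def)
qed


lemma mpc_power: "map_poly cnj (x ^ k) = (map_poly cnj x :: complex poly) ^ k"
proof -
  have "poly (map_poly cnj (x ^ k)) = poly ((map_poly cnj x) ^ k)"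
    by (rule ext) (simp add: poly_power)
  then show ?thesis by (simp add: poly_eq_poly_eq_iff)
qed

lemma qb_eq: "1 - Pb p = map_poly cnj p"
proof -
  have "poly (1 - Pb p) = poly (map_poly cnj p)"
    by (rule ext) (simp add: Pb_def)
  then show ?thesis by (simp add: poly_eq_poly_eq_iff)
qed

lemma dom_op_log: "dom (op_log A) = log_dom A" by (simp add: op_log_def dom_def)

lemma dom_Xp: "dom (Xp p) = log_dom (Yp p) \<inter> log_dom (op_adj (Yp p))"
  by (simp add: Xp_def dom_op_sub dom_op_log)

lemma log_dom_l2: "f \<in> log_dom A \<Longrightarrow> f \<in> l2"
proof -
  assume "f \<in> log_dom A"
  then have "\<forall>k. f \<in> dom (op_pow A k)" by (simp add: log_dom_def)
  then have "f \<in> dom (op_pow A 0)" by blast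
  then show ?thesis by simp
qed

lemma lp_Y: "log_partial (Yp p) f K = (\<lambda>n. \<Sum>k=1..K. 1 / of_nat k * pop (p ^ k) S f n)"
  unfolding log_partial_def Qop_def[symmetric] app_pow_Qop ..

lemma lp_adj: "f \<in> l2 \<Longrightarrow> log_partial (op_adj (Yp p)) f K = (\<lambda>n. \<Sum>k=1..K. 1 / of_nat k * pop (map_poly cnj p ^ k) T f n)"
  unfolding log_partial_def Qadj_def[symmetric] by (simp add: app_pow_Qadj qb_eq)

lemma Xlim:
  assumes "\<psi> \<in> dom (Xp p)"
  shows "(\<lambda>K. (\<Sum>k=1..K. 1 / of_nat k * pop (p ^ k) S \<psi> n)
            - (\<Sum>k=1..K. 1 / of_nat k * pop (map_poly cnj p ^ k) T \<psi> n)) \<longlonglongrightarrow> - app (Xp p) \<psi> n"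
proof -
  have d1: "\<psi> \<in> log_dom (Yp p)" and d2: "\<psi> \<in> log_dom (op_adj (Yp p))"
    using assms by (auto simp: dom_Xp)
  have l: "\<psi> \<in> l2" using log_dom_l2[OF d1] .
  have t1: "(\<lambda>K. log_partial (Yp p) \<psi> K n) \<longlonglongrightarrow> - app (op_log (Yp p)) \<psi> n"
    by (rule log_coord[OF d1]) (simp only: lp_Y, rule l2_sum, simp, rule l2_popS[OF l])
  have t2: "(\<lambda>K. log_partial (op_adj (Yp p)) \<psi> K n) \<longlonglongrightarrow> - app (op_log (op_adj (Yp p))) \<psi> n"
    by (rule log_coord[OF d2]) (simp only: lp_adj[OF l], rule l2_sum, simp, rule l2_popT[OF l])
  have "(\<lambda>K. log_partial (Yp p) \<psi> K n - log_partial (op_adj (Yp p)) \<psi> K n)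
      \<longlonglongrightarrow> - app (op_log (Yp p)) \<psi> n - - app (op_log (op_adj (Yp p))) \<psi> n"
    by (rule tendsto_diff[OF t1 t2])
  then show ?thesis by (simp add: lp_Y lp_adj l Xp_def app_op_sub vsub_def)
qed

definition cc :: "complex poly \<Rightarrow> complex" where "cc p = lead_coeff (1 - p)"
definition Pia :: "complex list \<Rightarrow> complex poly" where "Pia as = (\<Prod>a\<leftarrow>as. [:-a,1:])"
definition Pic :: "complex list \<Rightarrow> complex poly" where "Pic as = (\<Prod>a\<leftarrow>as. [:-cnj a,1:])"
definition kap :: "complex poly \<Rightarrow> complex list \<Rightarrow> complex" where
  "kap p as = cnj (cc p) * (\<Prod>a\<leftarrow>as. - cnj a) / cc p"

context
  fixes p :: "complex poly" and m :: nat and \<alpha> :: "complex list"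
  assumes deg: "degree p = m" and m1: "m \<ge> 1"
    and roots: "\<forall>z. 1 - poly p z = 0 \<longrightarrow> cmod z = 1"
    and len: "length \<alpha> = m" and ms: "mset \<alpha> = proots (1 - p)"
begin

lemma degP: "degree (1 - p) = m"
proof -
  have "degree (1 + (-p)) = degree (-p)" by (rule degree_add_eq_right) (use deg m1 in simp)
  then show ?thesis using deg by simp
qed

lemma P_nz: "1 - p \<noteq> 0" using degP m1 by auto

lemma c_nz: "cc p \<noteq> 0" unfolding cc_def using P_nz by (metis leading_coeff_0_iff)

lemma P_fact: "1 - p = smult (cc p) (Pia \<alpha>)"
proof -
  have "smult (lead_coeff (1-p)) (\<Prod>x\<in>#proots (1-p). [:-x,1:]) = 1 - p"
    by (rule complex_poly_decompose_multiset)
  moreover have "(\<Prod>x\<in>#proots (1-p). [:-x,1:]) = Pia \<alpha>"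
    unfolding Pia_def by (subst prod_mset_prod_list [symmetric]) (simp add: ms)
  ultimately show ?thesis by (simp add: cc_def)
qed

lemma unit: "\<forall>a\<in>set \<alpha>. cmod a = 1"
proof
  fix a assume "a \<in> set \<alpha>"
  then have "a \<in># proots (1 - p)" using ms by (metis set_mset_mset)
  then have "poly (1 - p) a = 0" using P_nz by simp
  then show "cmod a = 1" using roots by simp
qed

lemma Pb_fact: "Pb p = smult (cnj (cc p)) (Pic \<alpha>)"
proof -
  have "Pb p = map_poly cnj (smult (cc p) (Pia \<alpha>))" unfolding Pb_def using P_fact by simp
  also have "\<dots> = smult (cnj (cc p)) (map_poly cnj (Pia \<alpha>))"
    by (rule map_poly_smult) simp_all
  also have "map_poly cnj (Pia \<alpha>) = Pic \<alpha>" unfolding Pia_def Pic_def by (rule mpc_prod)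
  finally show ?thesis .
qed

lemma kap_nz: "kap p \<alpha> \<noteq> 0"
proof -
  have "(\<Prod>a\<leftarrow>\<alpha>. - cnj a) \<noteq> 0"
    using unit by (auto simp: prod_list_zero_iff)
  then show ?thesis using c_nz by (simp add: kap_def)
qed

lemma W: "(S^^m) (pop (Pb p) T v) = (\<lambda>n. kap p \<alpha> * pop (1 - p) S v n)"
proof -
  have wp: "(S^^m) (pop (Pic \<alpha>) T v) = pop (\<Prod>a\<leftarrow>\<alpha>. [:1,-cnj a:]) S v"
    using W_prod[of "map cnj \<alpha>" v] len by (simp add: Pic_def o_def)
  have "(S^^m) (pop (Pb p) T v) = (\<lambda>n. cnj (cc p) * (S^^m) (pop (Pic \<alpha>) T v) n)"
    unfolding Pb_fact pop_smult by (simp add: funpow_S fun_eq_iff)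
  also have "\<dots> = (\<lambda>n. cnj (cc p) * (\<Prod>a\<leftarrow>\<alpha>. - cnj a) * pop (Pia \<alpha>) S v n)"
    unfolding wp prod_rev_factor[OF unit] pop_smult Pia_def by (simp add: mult.assoc)
  also have "\<dots> = (\<lambda>n. kap p \<alpha> * pop (1 - p) S v n)"
    unfolding P_fact pop_smult kap_def using c_nz by (simp add: mult.assoc)
  finally show ?thesis .
qed


lemma main_coord:
  assumes conv0: "\<forall>f\<in>l2. (\<lambda>k. l2norm (app (op_pow (op_poly p opL) k) f)) \<longlonglongrightarrow> 0"
    and gl: "g \<in> l2" and phi: "\<phi> = pop (Pb p) T g"
    and d1: "\<phi> \<in> dom (Xp p)" and d2: "Nf \<phi> \<in> dom (Xp p)"
  shows "of_nat n * app (Xp p) \<phi> n - app (Xp p) (Nf \<phi>) n = - of_nat m * \<phi> n"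
proof -
  define qb where "qb = map_poly cnj p"
  define A where "A \<psi> K = (\<Sum>k=1..K. 1 / of_nat k * pop (p ^ k) S \<psi> n)
            - (\<Sum>k=1..K. 1 / of_nat k * pop (qb ^ k) T \<psi> n)" for \<psi> K
  have t1: "(\<lambda>K. A \<phi> K) \<longlonglongrightarrow> - app (Xp p) \<phi> n"
    unfolding A_def qb_def by (rule Xlim[OF d1])
  have t2: "(\<lambda>K. A (Nf \<phi>) K) \<longlonglongrightarrow> - app (Xp p) (Nf \<phi>) n"
    unfolding A_def qb_def by (rule Xlim[OF d2])
  have t3: "(\<lambda>K. of_nat n * A \<phi> K - A (Nf \<phi>) K) \<longlonglongrightarrow> of_nat n * (- app (Xp p) \<phi> n) - (- app (Xp p) (Nf \<phi>) n)"
    by (intro tendsto_diff tendsto_mult tendsto_const t1 t2)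
  have pl: "\<phi> \<in> l2" using phi gl by (simp add: l2_popT)
  define D where "D = pop (pCons 0 (pderiv (1 - p))) S"
  define Db where "Db = pop (pCons 0 (pderiv (Pb p))) T"
  define w where "w = Db g"
  define h where "h = (\<lambda>n. of_nat m * \<phi> n - w n)"
  have wl: "w \<in> l2" unfolding w_def Db_def by (rule l2_popT[OF gl])
  have hl: "h \<in> l2" unfolding h_def using l2_lin[OF pl wl, of "of_nat m" "-1"] by simp
  have key: "D \<phi> = pop (1 - p) S h"
  proof
    fix j show "D \<phi> j = pop (1 - p) S h j"
      using key_identity[where P="1 - p" and Pc="Pb p" and \<kappa>="kap p \<alpha>" and m=m and g=g and n=j, OF W kap_nz]
      unfolding D_def h_def w_def Db_def phi by simp
  qed
  have Dbphi: "Db \<phi> = pop (1 - qb) T w"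
    unfolding phi Db_def w_def qb_def qb_eq[symmetric] by (simp add: pop_comm[OF flin_T])
  have E: "pop (pCons 0 (pderiv p)) S f = (\<lambda>n. - D f n)" for f
  proof -
    have "pCons 0 (pderiv p) = - pCons 0 (pderiv (1 - p))"
      by (simp add: pderiv_diff minus_pCons)
    then show ?thesis unfolding D_def by (simp only: pop_minus)
  qed
  have Eb: "pop (pCons 0 (pderiv qb)) T f = (\<lambda>n. - Db f n)" for f
  proof -
    have "pCons 0 (pderiv qb) = - pCons 0 (pderiv (Pb p))"
      unfolding qb_def qb_eq[symmetric] by (simp add: pderiv_diff minus_pCons)
    then show ?thesis unfolding Db_def by (simp only: pop_minus)
  qed
  have eq: "of_nat n * A \<phi> K - A (Nf \<phi>) K = of_nat m * \<phi> n - pop (p ^ K) S h n - pop (qb ^ K) T w n" for K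
  proof -
    have s1: "of_nat n * A \<phi> K - A (Nf \<phi>) K =
        (\<Sum>k=1..K. 1 / of_nat k * (of_nat n * pop (p ^ k) S \<phi> n - pop (p ^ k) S (Nf \<phi>) n))
      - (\<Sum>k=1..K. 1 / of_nat k * (of_nat n * pop (qb ^ k) T \<phi> n - pop (qb ^ k) T (Nf \<phi>) n))"
      unfolding A_def by (simp add: sum_distrib_left sum_subtractf right_diff_distrib mult.left_commute)
    have s2: "(\<Sum>k=1..K. 1 / of_nat k * (of_nat n * pop (p ^ k) S \<phi> n - pop (p ^ k) S (Nf \<phi>) n))
        = (\<Sum>j<K. pop (p ^ j) S (D \<phi>) n)"
    proof -
      have "(\<Sum>k=1..K. 1 / of_nat k * (of_nat n * pop (p ^ k) S \<phi> n - pop (p ^ k) S (Nf \<phi>) n))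
          = (\<Sum>j<K. 1 / of_nat (Suc j) * (of_nat n * pop (p ^ Suc j) S \<phi> n - pop (p ^ Suc j) S (Nf \<phi>) n))"
        by (simp only: One_nat_def sum.atLeast1_atMost_eq)
      also have "\<dots> = (\<Sum>j<K. pop (p ^ j) S (D \<phi>) n)"
      proof (rule sum.cong[OF refl])
        fix j
        have c: "of_nat n * pop (p ^ Suc j) S \<phi> n - pop (p ^ Suc j) S (Nf \<phi>) n
            = - of_nat (Suc j) * pop (p ^ j) S (pop (pCons 0 (pderiv p)) S \<phi>) n"
          using comm_pow_S[of p j \<phi> n] by (simp add: Nf_app algebra_simps)
        have "pop (p ^ j) S (pop (pCons 0 (pderiv p)) S \<phi>) n = - pop (p ^ j) S (D \<phi>) n"
          unfolding E using flin_scale[OF flin_pop[OF flin_S], of "p ^ j" "-1" "D \<phi>"] by simp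
        then show "1 / of_nat (Suc j) * (of_nat n * pop (p ^ Suc j) S \<phi> n - pop (p ^ Suc j) S (Nf \<phi>) n)
            = pop (p ^ j) S (D \<phi>) n"
          unfolding c by (simp del: of_nat_Suc)
      qed
      finally show ?thesis .
    qed
    have s3: "(\<Sum>k=1..K. 1 / of_nat k * (of_nat n * pop (qb ^ k) T \<phi> n - pop (qb ^ k) T (Nf \<phi>) n))
        = - (\<Sum>j<K. pop (qb ^ j) T (Db \<phi>) n)"
    proof -
      have "(\<Sum>k=1..K. 1 / of_nat k * (of_nat n * pop (qb ^ k) T \<phi> n - pop (qb ^ k) T (Nf \<phi>) n))
          = (\<Sum>j<K. 1 / of_nat (Suc j) * (of_nat n * pop (qb ^ Suc j) T \<phi> n - pop (qb ^ Suc j) T (Nf \<phi>) n))"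
        by (simp only: One_nat_def sum.atLeast1_atMost_eq)
      also have "\<dots> = (\<Sum>j<K. - pop (qb ^ j) T (Db \<phi>) n)"
      proof (rule sum.cong[OF refl])
        fix j
        have c: "of_nat n * pop (qb ^ Suc j) T \<phi> n - pop (qb ^ Suc j) T (Nf \<phi>) n
            = of_nat (Suc j) * pop (qb ^ j) T (pop (pCons 0 (pderiv qb)) T \<phi>) n"
          using comm_pow_T[of qb j \<phi> n] by (simp add: Nf_app algebra_simps)
        have "pop (qb ^ j) T (pop (pCons 0 (pderiv qb)) T \<phi>) n = - pop (qb ^ j) T (Db \<phi>) n"
          unfolding Eb using flin_scale[OF flin_pop[OF flin_T], of "qb ^ j" "-1" "Db \<phi>"] by simp
        then show "1 / of_nat (Suc j) * (of_nat n * pop (qb ^ Suc j) T \<phi> n - pop (qb ^ Suc j) T (Nf \<phi>) n)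
            = - pop (qb ^ j) T (Db \<phi>) n"
          unfolding c by (simp del: of_nat_Suc)
      qed
      also have "\<dots> = - (\<Sum>j<K. pop (qb ^ j) T (Db \<phi>) n)" by (simp add: sum_negf)
      finally show ?thesis .
    qed
    have s4: "(\<Sum>j<K. pop (p ^ j) S (D \<phi>) n) = h n - pop (p ^ K) S h n"
    proof -
      have "pop (p ^ j) S (D \<phi>) n = pop (p ^ j) S h n - pop (p ^ Suc j) S h n" for j
      proof -
        have "pop (p ^ j) S (D \<phi>) = pop (p ^ j * (1 - p)) S h" unfolding key pop_mult[OF flin_S] ..
        also have "p ^ j * (1 - p) = p ^ j - p ^ Suc j" by (simp add: algebra_simps)
        finally show ?thesis by (simp add: pop_diff)
      qed
      then have "(\<Sum>j<K. pop (p ^ j) S (D \<phi>) n) = (\<Sum>j<K. pop (p ^ j) S h n - pop (p ^ Suc j) S h n)"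
        by simp
      also have "\<dots> = pop (p ^ 0) S h n - pop (p ^ K) S h n"
        by (rule sum_lessThan_telescope'[where f="\<lambda>j. pop (p ^ j) S h n"])
      finally show ?thesis by simp
    qed
    have s5: "(\<Sum>j<K. pop (qb ^ j) T (Db \<phi>) n) = w n - pop (qb ^ K) T w n"
    proof -
      have "pop (qb ^ j) T (Db \<phi>) n = pop (qb ^ j) T w n - pop (qb ^ Suc j) T w n" for j
      proof -
        have "pop (qb ^ j) T (Db \<phi>) = pop (qb ^ j * (1 - qb)) T w" unfolding Dbphi pop_mult[OF flin_T] ..
        also have "qb ^ j * (1 - qb) = qb ^ j - qb ^ Suc j" by (simp add: algebra_simps)
        finally show ?thesis by (simp add: pop_diff)
      qed
      then have "(\<Sum>j<K. pop (qb ^ j) T (Db \<phi>) n) = (\<Sum>j<K. pop (qb ^ j) T w n - pop (qb ^ Suc j) T w n)"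
        by simp
      also have "\<dots> = pop (qb ^ 0) T w n - pop (qb ^ K) T w n"
        by (rule sum_lessThan_telescope'[where f="\<lambda>j. pop (qb ^ j) T w n"])
      finally show ?thesis by simp
    qed
    show ?thesis unfolding s1 s2 s3 s4 s5 h_def by simp
  qed
  have z1: "(\<lambda>K. pop (p ^ K) S h n) \<longlonglongrightarrow> 0"
  proof (rule coord_tendsto)
    show "pop (p ^ K) S h \<in> l2" for K by (rule l2_popS[OF hl])
    have ee: "app (op_pow (op_poly p opL) k) h = pop (p ^ k) S h" for k
      by (simp add: app_op_pow app_poly_L pop_power[OF flin_S])
    show "(\<lambda>K. l2norm (pop (p ^ K) S h)) \<longlonglongrightarrow> 0" using conv0[rule_format, OF hl] by (simp only: ee)
  qed
  have z2: "(\<lambda>K. pop (qb ^ K) T w n) \<longlonglongrightarrow> 0"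
  proof (rule Lim_null_comparison)
    have ee: "app (op_pow (op_poly p opL) k) (delta n) = pop (p ^ k) S (delta n)" for k
      by (simp add: app_op_pow app_poly_L pop_power[OF flin_S])
    have "(\<lambda>K. l2norm (pop (p ^ K) S (delta n))) \<longlonglongrightarrow> 0"
      using conv0[rule_format, OF delta_l2[of n]] by (simp only: ee)
    then show "(\<lambda>K. l2norm (pop (p ^ K) S (delta n)) * l2norm w) \<longlonglongrightarrow> 0"
      by (rule tendsto_mult_left_zero)
    show "\<forall>\<^sub>F K in sequentially. norm (pop (qb ^ K) T w n) \<le> l2norm (pop (p ^ K) S (delta n)) * l2norm w"
    proof (rule always_eventually, rule allI)
      fix K
      have "l2inner (pop (p ^ K) S (delta n)) w = cnj (pop (qb ^ K) T w n)"
        unfolding inner_pop[OF delta_l2 wl] inner_delta_left qb_def mpc_power ..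
      then have "norm (pop (qb ^ K) T w n) = cmod (l2inner (pop (p ^ K) S (delta n)) w)" by simp
      also have "\<dots> \<le> l2norm (pop (p ^ K) S (delta n)) * l2norm w"
        by (rule CS[OF l2_popS[OF delta_l2] wl])
      finally show "norm (pop (qb ^ K) T w n) \<le> l2norm (pop (p ^ K) S (delta n)) * l2norm w" .
    qed
  qed
  have t4: "(\<lambda>K. of_nat n * A \<phi> K - A (Nf \<phi>) K) \<longlonglongrightarrow> of_nat m * \<phi> n - 0 - 0"
    unfolding eq by (intro tendsto_diff tendsto_const z1 z2)
  have "of_nat n * (- app (Xp p) \<phi> n) - (- app (Xp p) (Nf \<phi>) n) = of_nat m * \<phi> n - 0 - 0"
    by (rule LIMSEQ_unique[OF t3 t4])
  then show ?thesis by (simp add: algebra_simps)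
qed

end


theorem mainTheorem15:
  fixes p :: "complex poly" and m :: nat and \<alpha> :: "complex list"
  assumes "degree p = m" and "m \<ge> 1"
    and "inj_on (app (Yp p)) (dom (Yp p))"
    and "\<forall>f\<in>l2. (\<lambda>k. l2norm (app (op_pow (op_poly p opL) k) f)) \<longlonglongrightarrow> 0"
    and "\<forall>z. 1 - poly p z = 0 \<longrightarrow> cmod z = 1"
    and "length \<alpha> = m" and "mset \<alpha> = proots (1 - p)"
  shows "commutator_on opN (op_scale (\<i> / of_nat m) (Xp p)) (op_scale (- \<i>) op_id)
           (op_range (root_prod \<alpha>) \<inter> dom (op_comp (Xp p) opN) \<inter> dom (op_comp opN (Xp p)))"
proof -
  let ?B = "op_scale (\<i> / of_nat m) (Xp p)"
  let ?D = "op_range (root_prod \<alpha>) \<inter> dom (op_comp (Xp p) opN) \<inter> dom (op_comp opN (Xp p))"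
  have m0: "(of_nat m :: complex) \<noteq> 0" using assms(2) by simp
  have facts: "\<phi> \<in> dom (Xp p)" "app (Xp p) \<phi> \<in> l2" "Nf (app (Xp p) \<phi>) \<in> l2"
      "\<phi> \<in> l2" "Nf \<phi> \<in> l2" "Nf \<phi> \<in> dom (Xp p)" if "\<phi> \<in> ?D" for \<phi>
    using that by (auto simp: dom_op_comp dom_opN app_opN)
  have sub1: "?D \<subseteq> dom (op_comp opN ?B) \<inter> dom (op_comp ?B opN)"
  proof
    fix \<phi> assume a: "\<phi> \<in> ?D"
    have eqN: "Nf (\<lambda>n. (\<i> / of_nat m) * app (Xp p) \<phi> n) = (\<lambda>n. (\<i> / of_nat m) * Nf (app (Xp p) \<phi>) n)"
      by (simp add: Nf_def fun_eq_iff)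
    have s1: "(\<lambda>n. (\<i> / of_nat m) * app (Xp p) \<phi> n) \<in> l2" by (rule l2_scale) (rule facts[OF a])
    have s2: "(\<lambda>n. (\<i> / of_nat m) * Nf (app (Xp p) \<phi>) n) \<in> l2" by (rule l2_scale) (rule facts[OF a])
    have "vscale (\<i> / of_nat m) (app (Xp p) \<phi>) \<in> dom opN"
      unfolding dom_opN vscale_def mem_Collect_eq eqN using s1 s2 by blast
    then show "\<phi> \<in> dom (op_comp opN ?B) \<inter> dom (op_comp ?B opN)"
      using facts[OF a] by (simp add: dom_op_comp dom_op_scale app_op_scale dom_opN app_opN)
  qed
  have sub2: "?D \<subseteq> dom (op_scale (- \<i>) op_id)"
    using facts by (auto simp: dom_op_scale)
  have main: "\<forall>\<phi>\<in>?D. vsub (app opN (app ?B \<phi>)) (app ?B (app opN \<phi>)) = app (op_scale (- \<i>) op_id) \<phi>"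
  proof
    fix \<phi> assume a: "\<phi> \<in> ?D"
    obtain g0 where g0: "g0 \<in> dom (root_prod \<alpha>)" "\<phi> = app (root_prod \<alpha>) g0"
      using a by (auto simp: op_range_def)
    have g0l: "g0 \<in> l2" using g0(1) dom_root_prod by blast
    have un: "\<forall>a\<in>set \<alpha>. cmod a = 1" by (rule unit[OF assms(1,2,5,6,7)])
    have cnz: "cnj (cc p) \<noteq> 0" using c_nz[OF assms(1,2,5,6,7)] by simp
    define g where "g = (\<lambda>n. (\<Prod>a\<leftarrow>\<alpha>. a) / cnj (cc p) * g0 n)"
    have gl: "g \<in> l2" unfolding g_def by (rule l2_scale[OF g0l])
    have phi: "\<phi> = pop (Pb p) T g"
    proof -
      have "\<phi> = pop (smult (\<Prod>a\<leftarrow>\<alpha>. a) (Pic \<alpha>)) T g0"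
        unfolding g0(2) app_root_prod prod_rp_factor[OF un] Pic_def ..
      also have "\<dots> = (\<lambda>n. (\<Prod>a\<leftarrow>\<alpha>. a) * pop (Pic \<alpha>) T g0 n)" by (rule pop_smult)
      also have "\<dots> = pop (Pb p) T g"
        unfolding Pb_fact[OF assms(1,2,5,6,7)] pop_smult g_def flin_scale[OF flin_pop[OF flin_T]]
        using cnz by simp
      finally show ?thesis .
    qed
    have mc: "of_nat n * app (Xp p) \<phi> n - app (Xp p) (Nf \<phi>) n = - of_nat m * \<phi> n" for n
      by (rule main_coord[OF assms(1,2,5,6,7) assms(4) gl phi facts(1)[OF a] facts(6)[OF a]])
    show "vsub (app opN (app ?B \<phi>)) (app ?B (app opN \<phi>)) = app (op_scale (- \<i>) op_id) \<phi>"
    proof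
      fix n
      have "vsub (app opN (app ?B \<phi>)) (app ?B (app opN \<phi>)) n
          = (\<i> / of_nat m) * (of_nat n * app (Xp p) \<phi> n - app (Xp p) (Nf \<phi>) n)"
        by (simp add: vsub_def app_opN app_op_scale vscale_def Nf_def algebra_simps)
      also have "\<dots> = - \<i> * \<phi> n" unfolding mc using m0 by simp
      finally show "vsub (app opN (app ?B \<phi>)) (app ?B (app opN \<phi>)) n = app (op_scale (- \<i>) op_id) \<phi> n"
        by (simp add: app_op_scale vscale_def)
    qed
  qed
  show ?thesis unfolding commutator_on_def using sub1 sub2 main by blast
qed


end
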